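(* Assume the subgraph $\mathcal G_{\sigma(t)}$ is undirected for all $t\ge0$, and that there exist $T_{\mathrm c}>0$ and a subsequence $\{t_{j_k}:k=0,1,2,\dots\}$ of the switching instants with $t_{j_0}=0$ and $t_{j_{k+1}}-t_{j_k}\le T_{\mathrm c}$, such that for every $k$ every node $i\in\{1,\dots,N\}$ is reachable from node $0$ in the union graph $\bigcup_{t_j\in[t_{j_k},t_{j_{k+1}})}\bar{\mathcal G}_{\sigma(t_j)}$. Then there exists $0<\delta<1$ such that for every positive integer $\ell$, $$\left\|\prod_{r=j_k}^{j_{k+\ell}-1}P_{\sigma(t_r)}\right\|\le\delta^{\ell}\quad\text{for all }k=0,1,2,\dots.$$
   Context: $\sigma:[0,\infty)\to\mathcal P=\{1,\dots,n_0\}$ is a piecewise constant switching signal: there are switching instants $0=t_0<t_1<\cdots$ and a dwell time $\tau>0$ with $t_{j+1}-t_j\ge\tau$, and $\sigma$ is constant on each $[t_j,t_{j+1})$. For each $p\in\mathcal P$, $\bar{\mathcal G}_p$ is a graph on nodes $\{0,1,\dots,N\}$ with edge set $\bar{\mathcal E}_p$ of ordered pairs $(j,i)$, $j\ne i$; $a_{ij}(t)=1$ if $(j,i)\in\bar{\mathcal E}_{\sigma(t)}$, else $0$. $\mathcal G_{\sigma(t)}$ is the subgraph on $\{1,\dots,N\}$ with the edges of $\bar{\mathcal E}_{\sigma(t)}$ among those nodes (undirected: $(i,j)$ edge iff $(j,i)$ edge), with Laplacian $\mathcal L_{\sigma(t)}$ ($l_{ii}=\sum_{j=1}^Na_{ij}(t)$,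 $l_{ij}=-a_{ij}(t)$, $i\ne j$). $\Delta_{\sigma(t)}=\mathrm{diag}(a_{10}(t),\dots,a_{N0}(t))$, $\mathcal H_{\sigma(t)}=\mathcal L_{\sigma(t)}+\Delta_{\sigma(t)}$, and $P_{\sigma(t)}$ is the orthogonal projection of $\mathbb{R}^N$ onto $\ker\mathcal H_{\sigma(t)}$ (zero matrix if the kernel is trivial). Node $i$ is reachable from $0$ if the graph has edges $(0,i_2),(i_2,i_3),\dots,(i_s,i)$; the union graph has the union of edge sets. $\prod_{r=m}^n\Xi_r=\Xi_n\cdots\Xi_m$. $\|\cdot\|$ is the matrix norm induced by the Euclidean norm. *)

theory Defs
  imports "HOL-Analysis.Analysis"
begin

text \<open>Nodes: the leader node 0 is None, followers 1..N are Some i with i :: 'n (CARD('n) = N).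
  An edge set is a relation on 'n option; (j,i) means the edge from j to i.\<close>

definition adj :: "('n option \<times> 'n option) set \<Rightarrow> 'n \<Rightarrow> 'n \<Rightarrow> real" where
  "adj E i j = (if (Some j, Some i) \<in> E then 1 else 0)"

definition lead_adj :: "('n option \<times> 'n option) set \<Rightarrow> 'n \<Rightarrow> real" where
  "lead_adj E i = (if (None, Some i) \<in> E then 1 else 0)"

definition laplacian :: "('n::finite option \<times> 'n option) set \<Rightarrow> real^'n^'n" where
  "laplacian E = (\<chi> i j. if i = j then (\<Sum>k\<in>UNIV. adj E i k) else - adj E i j)"

definition Delta_mat :: "('n::finite option \<times> 'n option) set \<Rightarrow> real^'n^'n" where
  "Delta_mat E = (\<chi> i j. if i = j then lead_adj E i else 0)"

definition H_mat :: "('n::finite option \<times> 'n option) set \<Rightarrow> real^'n^'n" where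
  "H_mat E = laplacian E + Delta_mat E"

text \<open>Orthogonal projection (as a matrix) onto the kernel of a matrix.\<close>
definition proj_ker :: "real^'n^'n \<Rightarrow> real^'n^'n" where
  "proj_ker H = (THE P. \<forall>x. H *v (P *v x) = 0 \<and>
       (\<forall>y. H *v y = 0 \<longrightarrow> (x - P *v x) \<bullet> y = 0))"

text \<open>Ordered product: lprod f m d = f (m+d-1) ** ... ** f m  (identity if d = 0).\<close>
fun lprod :: "(nat \<Rightarrow> real^'n^'n) \<Rightarrow> nat \<Rightarrow> nat \<Rightarrow> real^'n^'n" where
  "lprod f m 0 = mat 1"
| "lprod f m (Suc d) = f (m + d) ** lprod f m d"

end

theory Submission
  imports Defs
begin

lemma proj_unique:
  fixes H :: "real^'n^'n"
  assumes "H *v y = 0" "H *v y' = 0"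
    "\<And>w. H *v w = 0 \<Longrightarrow> (x - y) \<bullet> w = 0"
    "\<And>w. H *v w = 0 \<Longrightarrow> (x - y') \<bullet> w = 0"
  shows "y = y'"
proof -
  have k: "H *v (y - y') = 0" using assms(1,2) by (simp add: matrix_vector_mult_diff_distrib)
  have "(x - y') \<bullet> (y - y') - (x - y) \<bullet> (y - y') = 0" using assms(3,4)[OF k] by simp
  then have "(y - y') \<bullet> (y - y') = 0" by (simp add: inner_diff_left)
  then show ?thesis by simp
qed

lemma proj_ker_prop:
  fixes H :: "real^'n^'n"
  shows "H *v (proj_ker H *v x) = 0 \<and> (\<forall>y. H *v y = 0 \<longrightarrow> (x - proj_ker H *v x) \<bullet> y = 0)"
proof -
  define V where "V = {y. H *v y = 0}"
  have sV: "subspace V" unfolding V_def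
    using linear_subspace_kernel[OF bounded_linear.linear[OF matrix_vector_mul_bounded_linear[of H]]] by simp
  then have spV: "span V = V" by simp
  define Q where "Q x = (SOME y. y \<in> V \<and> (\<forall>w\<in>V. (x - y) \<bullet> w = 0))" for x
  have ex: "\<exists>y. y \<in> V \<and> (\<forall>w\<in>V. (x - y) \<bullet> w = 0)" for x
  proof -
    obtain y z where "y \<in> span V" "\<And>w. w \<in> span V \<Longrightarrow> orthogonal z w" "x = y + z"
      using orthogonal_subspace_decomp_exists by blast
    then show ?thesis using spV by (intro exI[of _ y]) (auto simp: orthogonal_def)
  qed
  have Q: "Q x \<in> V \<and> (\<forall>w\<in>V. (x - Q x) \<bullet> w = 0)" for x
    unfolding Q_def by (rule someI_ex[OF ex])
  have uq: "Q x = y" if "y \<in> V" "\<forall>w\<in>V. (x - y) \<bullet> w = 0" for x y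
  proof -
    have a: "H *v Q x = 0" "\<And>w. H *v w = 0 \<Longrightarrow> (x - Q x) \<bullet> w = 0"
      using Q[of x] unfolding V_def by auto
    have b: "H *v y = 0" "\<And>w. H *v w = 0 \<Longrightarrow> (x - y) \<bullet> w = 0"
      using that unfolding V_def by auto
    show ?thesis by (rule proj_unique[of H, OF a(1) b(1) a(2) b(2)])
  qed
  have lin: "linear Q"
  proof (rule linearI)
    fix a b
    show "Q (a + b) = Q a + Q b"
    proof (rule uq)
      show "Q a + Q b \<in> V" using Q[of a] Q[of b] sV by (simp add: subspace_add)
      have "(a + b - (Q a + Q b)) \<bullet> w = (a - Q a) \<bullet> w + (b - Q b) \<bullet> w" for w
        by (simp add: inner_diff_left inner_add_left)
      then show "\<forall>w\<in>V. (a + b - (Q a + Q b)) \<bullet> w = 0" using Q[of a] Q[of b] by simp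
    qed
  next
    fix r a
    show "Q (r *\<^sub>R a) = r *\<^sub>R Q a"
    proof (rule uq)
      show "r *\<^sub>R Q a \<in> V" using Q[of a] sV by (simp add: subspace_scale)
      have "(r *\<^sub>R a - r *\<^sub>R Q a) \<bullet> w = r * ((a - Q a) \<bullet> w)" for w
        by (simp add: inner_diff_left right_diff_distrib)
      then show "\<forall>w\<in>V. (r *\<^sub>R a - r *\<^sub>R Q a) \<bullet> w = 0" using Q[of a] by simp
    qed
  qed
  define P where "P = matrix Q"
  have PQ: "P *v x = Q x" for x
    using matrix_vector_mul(2)[OF lin] unfolding P_def by metis
  have Pprop: "\<forall>x. H *v (P *v x) = 0 \<and> (\<forall>y. H *v y = 0 \<longrightarrow> (x - P *v x) \<bullet> y = 0)"
    using Q unfolding V_def by (simp add: PQ)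
  have "proj_ker H = P"
    unfolding proj_ker_def
  proof (rule the_equality)
    show "\<forall>x. H *v (P *v x) = 0 \<and> (\<forall>y. H *v y = 0 \<longrightarrow> (x - P *v x) \<bullet> y = 0)" by (fact Pprop)
  next
    fix P' assume a: "\<forall>x. H *v (P' *v x) = 0 \<and> (\<forall>y. H *v y = 0 \<longrightarrow> (x - P' *v x) \<bullet> y = 0)"
    show "P' = P" unfolding matrix_eq
    proof
      fix x show "P' *v x = P *v x"
        using a Pprop by (metis proj_unique)
    qed
  qed
  then show ?thesis using Pprop by simp
qed

lemma ker_H_edges:
  fixes E :: "('n::finite option \<times> 'n option) set" and x :: "real^'n"
  assumes sym: "\<And>i j. (Some j, Some i) \<in> E \<longleftrightarrow> (Some i, Some j) \<in> E"
    and noloop: "\<And>i. (Some i, Some i) \<notin> E"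
    and ker: "H_mat E *v x = 0"
  shows "(\<forall>a b. (Some a, Some b) \<in> E \<longrightarrow> x$a = x$b) \<and> (\<forall>b. (None, Some b) \<in> E \<longrightarrow> x$b = 0)"
proof -
  let ?a = "adj E" and ?l = "lead_adj E"
  have asym: "?a i j = ?a j i" for i j using sym unfolding adj_def by auto
  have aii: "?a i i = 0" for i using noloop unfolding adj_def by auto
  have anneg: "?a i j \<ge> 0" for i j unfolding adj_def by auto
  have lnneg: "?l i \<ge> 0" for i unfolding lead_adj_def by auto
  have Hi: "(H_mat E *v x) $ i = (\<Sum>k\<in>UNIV. ?a i k * (x$i - x$k)) + ?l i * x$i" for i
  proof -
    have e: "(if i = j then (\<Sum>k\<in>UNIV. ?a i k) else - ?a i j) + (if i = j then ?l i else 0)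
        = (if i = j then (\<Sum>k\<in>UNIV. ?a i k) + ?l i else 0) - ?a i j" for j
      using aii by auto
    have "(H_mat E *v x) $ i = (\<Sum>j\<in>UNIV. ((if i = j then (\<Sum>k\<in>UNIV. ?a i k) + ?l i else 0) - ?a i j) * x$j)"
      unfolding H_mat_def laplacian_def Delta_mat_def matrix_vector_mult_def
      by (simp add: e)
    also have "\<dots> = (\<Sum>j\<in>UNIV. (if i = j then ((\<Sum>k\<in>UNIV. ?a i k) + ?l i) else 0) * x$j) - (\<Sum>j\<in>UNIV. ?a i j * x$j)"
      by (simp only: left_diff_distrib sum_subtractf)
    also have "\<dots> = ((\<Sum>k\<in>UNIV. ?a i k) + ?l i) * x$i - (\<Sum>j\<in>UNIV. ?a i j * x$j)"
    proof -
      have "(\<Sum>j\<in>UNIV. (if i = j then ((\<Sum>k\<in>UNIV. ?a i k) + ?l i) else 0) * x$j) = (\<Sum>j\<in>UNIV. (if i = j then ((\<Sum>k\<in>UNIV. ?a i k) + ?l i) * x$j else 0))"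
        by (rule sum.cong) auto
      also have "\<dots> = ((\<Sum>k\<in>UNIV. ?a i k) + ?l i) * x$i"
        by (simp add: sum.delta)
      finally show ?thesis by simp
    qed
    also have "\<dots> = (\<Sum>k\<in>UNIV. ?a i k * (x$i - x$k)) + ?l i * x$i"
    proof -
      have "(\<Sum>k\<in>UNIV. ?a i k * (x$i - x$k)) = (\<Sum>k\<in>UNIV. ?a i k) * x$i - (\<Sum>k\<in>UNIV. ?a i k * x$k)"
        by (simp add: right_diff_distrib sum_subtractf sum_distrib_right)
      moreover have "((\<Sum>k\<in>UNIV. ?a i k) + ?l i) * x$i = (\<Sum>k\<in>UNIV. ?a i k) * x$i + ?l i * x$i"
        by (simp add: distrib_right)
      ultimately show ?thesis by linarith
    qed
    finally show ?thesis .
  qed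
  define A where "A = (\<Sum>i\<in>UNIV. \<Sum>k\<in>UNIV. ?a i k * x$i * (x$i - x$k))"
  have "x \<bullet> (H_mat E *v x) = 0" using ker by simp
  then have "(\<Sum>i\<in>UNIV. x$i * ((\<Sum>k\<in>UNIV. ?a i k * (x$i - x$k)) + ?l i * x$i)) = 0"
    by (simp add: inner_vec_def Hi)
  then have z1: "A + (\<Sum>i\<in>UNIV. ?l i * (x$i)^2) = 0"
    unfolding A_def by (simp add: distrib_left sum.distrib sum_distrib_left power2_eq_square algebra_simps)
  have "A = (\<Sum>k\<in>UNIV. \<Sum>i\<in>UNIV. ?a i k * x$i * (x$i - x$k))"
    unfolding A_def by (rule sum.swap)
  also have "\<dots> = (\<Sum>i\<in>UNIV. \<Sum>k\<in>UNIV. ?a i k * x$k * (x$k - x$i))"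
    by (simp add: asym)
  finally have "2 * A = (\<Sum>i\<in>UNIV. \<Sum>k\<in>UNIV. ?a i k * x$i * (x$i - x$k)) + (\<Sum>i\<in>UNIV. \<Sum>k\<in>UNIV. ?a i k * x$k * (x$k - x$i))"
    unfolding A_def by simp
  also have "\<dots> = (\<Sum>i\<in>UNIV. \<Sum>k\<in>UNIV. ?a i k * (x$i - x$k)^2)"
    by (simp add: sum.distrib[symmetric] power2_eq_square algebra_simps)
  finally have A2: "2 * A = (\<Sum>i\<in>UNIV. \<Sum>k\<in>UNIV. ?a i k * (x$i - x$k)^2)" .
  have t1: "(\<Sum>i\<in>UNIV. \<Sum>k\<in>UNIV. ?a i k * (x$i - x$k)^2) \<ge> 0"
    by (intro sum_nonneg mult_nonneg_nonneg anneg) simp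
  have t2: "(\<Sum>i\<in>UNIV. ?l i * (x$i)^2) \<ge> 0"
    by (intro sum_nonneg mult_nonneg_nonneg lnneg) simp
  have s1: "(\<Sum>i\<in>UNIV. \<Sum>k\<in>UNIV. ?a i k * (x$i - x$k)^2) = 0" using z1 A2 t1 t2 by linarith
  have s2: "(\<Sum>i\<in>UNIV. ?l i * (x$i)^2) = 0" using z1 A2 t1 t2 by linarith
  have f1: "?a i k * (x$i - x$k)^2 = 0" for i k
  proof -
    have "(\<Sum>k\<in>UNIV. ?a i k * (x$i - x$k)^2) = 0"
      using s1 by (subst (asm) sum_nonneg_eq_0_iff) (auto intro!: sum_nonneg mult_nonneg_nonneg anneg)
    then show ?thesis
      by (subst (asm) sum_nonneg_eq_0_iff) (auto intro!: mult_nonneg_nonneg anneg)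
  qed
  have f2: "?l i * (x$i)^2 = 0" for i
    using s2 by (subst (asm) sum_nonneg_eq_0_iff) (auto intro!: mult_nonneg_nonneg lnneg)
  show ?thesis
  proof (intro conjI allI impI)
    fix a b assume "(Some a, Some b) \<in> E"
    then have "(x$b - x$a)^2 = 0" using f1[of b a] unfolding adj_def by simp
    then show "x$a = x$b" by simp
  next
    fix b assume "(None, Some b) \<in> E"
    then have "(x$b)^2 = 0" using f2[of b] unfolding lead_adj_def by simp
    then show "x$b = 0" by simp
  qed
qed

lemma proj_norm:
  fixes H :: "real^'n^'n"
  shows "norm (proj_ker H *v x) \<le> norm x \<and> (norm (proj_ker H *v x) = norm x \<longrightarrow> H *v x = 0)"
proof -
  let ?y = "proj_ker H *v x"
  have k: "H *v ?y = 0" and o: "(x - ?y) \<bullet> ?y = 0" using proj_ker_prop[of H x] by auto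
  have "x = ?y + (x - ?y)" by simp
  then have "(norm x)^2 = (norm ?y)^2 + (norm (x - ?y))^2"
    using norm_add_Pythagorean[of ?y "x - ?y"] o by (simp add: orthogonal_def inner_commute)
  then have e: "(norm x)^2 = (norm ?y)^2 + (norm (x - ?y))^2" .
  have "(norm ?y)^2 \<le> (norm x)^2" using e by simp
  then have le: "norm ?y \<le> norm x" by (simp add: power2_le_iff_abs_le)
  moreover have "norm ?y = norm x \<longrightarrow> H *v x = 0"
  proof
    assume "norm ?y = norm x"
    then have "norm (x - ?y) = 0" using e by simp
    then have "?y = x" by simp
    then show "H *v x = 0" using k by simp
  qed
  ultimately show ?thesis by blast
qed

lemma lprod_norm:
  fixes Hf :: "nat \<Rightarrow> real^'n^'n"
  shows "norm (lprod (\<lambda>r. proj_ker (Hf r)) m d *v x) \<le> norm x \<and>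
    (norm (lprod (\<lambda>r. proj_ker (Hf r)) m d *v x) = norm x \<longrightarrow>
      lprod (\<lambda>r. proj_ker (Hf r)) m d *v x = x \<and> (\<forall>r. m \<le> r \<and> r < m + d \<longrightarrow> Hf r *v x = 0))"
proof (induction d)
  case 0
  then show ?case by auto
next
  case (Suc d)
  let ?L = "lprod (\<lambda>r. proj_ker (Hf r)) m d *v x"
  have eq: "lprod (\<lambda>r. proj_ker (Hf r)) m (Suc d) *v x = proj_ker (Hf (m + d)) *v ?L"
    by (simp add: matrix_vector_mul_assoc)
  have p: "norm (proj_ker (Hf (m + d)) *v ?L) \<le> norm ?L \<and>
      (norm (proj_ker (Hf (m + d)) *v ?L) = norm ?L \<longrightarrow> Hf (m + d) *v ?L = 0)"
    by (rule proj_norm)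
  have p2: "norm (proj_ker (Hf (m + d)) *v ?L) = norm ?L \<longrightarrow> proj_ker (Hf (m + d)) *v ?L = ?L"
  proof
    assume a: "norm (proj_ker (Hf (m + d)) *v ?L) = norm ?L"
    let ?y = "proj_ker (Hf (m + d)) *v ?L"
    have k: "(?L - ?y) \<bullet> ?L = 0" using proj_ker_prop[of "Hf (m+d)" ?L] p a by auto
    have o: "(?L - ?y) \<bullet> ?y = 0" using proj_ker_prop[of "Hf (m+d)" ?L] by auto
    have "(?L - ?y) \<bullet> (?L - ?y) = 0" using k o by (simp add: inner_diff_right)
    then show "?y = ?L" by simp
  qed
  show ?case
  proof (intro conjI impI)
    show "norm (lprod (\<lambda>r. proj_ker (Hf r)) m (Suc d) *v x) \<le> norm x"
      unfolding eq using conjunct1[OF p] conjunct1[OF Suc.IH] by linarith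
  next
    assume a: "norm (lprod (\<lambda>r. proj_ker (Hf r)) m (Suc d) *v x) = norm x"
    then have n1: "norm ?L = norm x" and n2: "norm (proj_ker (Hf (m + d)) *v ?L) = norm ?L"
      using a[unfolded eq] conjunct1[OF p] conjunct1[OF Suc.IH] by linarith+
    then have Lx: "?L = x" and hr: "\<forall>r. m \<le> r \<and> r < m + d \<longrightarrow> Hf r *v x = 0"
      using Suc.IH by auto
    show "lprod (\<lambda>r. proj_ker (Hf r)) m (Suc d) *v x = x"
      using eq p2 n2 Lx by simp
    show "\<forall>r. m \<le> r \<and> r < m + Suc d \<longrightarrow> Hf r *v x = 0"
    proof (intro allI impI)
      fix r assume r: "m \<le> r \<and> r < m + Suc d"
      show "Hf r *v x = 0"
      proof (cases "r < m + d")
        case True then show ?thesis using hr r by auto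
      next
        case False then have "r = m + d" using r by simp
        then show ?thesis using p n2 Lx by simp
      qed
    qed
  qed
qed

lemma lprod_add: "lprod f m (a + b) = lprod f (m + a) b ** lprod f m a"
  by (induction b) (simp_all add: matrix_mul_assoc add.assoc)

lemma lprod_foldr: "lprod f m d = foldr (**) (rev (map f [m..<m+d])) (mat 1)"
  by (induction d) simp_all

lemma onorm_lt1:
  fixes M :: "real^'n^'n"
  assumes "\<And>x. x \<noteq> 0 \<Longrightarrow> norm (M *v x) < norm x"
  shows "onorm (\<lambda>x. M *v x) < 1"
proof -
  let ?S = "sphere (0::real^'n) 1"
  have c: "compact ?S" by simp
  have ne: "?S \<noteq> {}" by simp
  have cont: "continuous_on ?S (\<lambda>x. norm (M *v x))"
    by (intro continuous_on_norm linear_continuous_on matrix_vector_mul_bounded_linear)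
  obtain x0 where x0: "x0 \<in> ?S" "\<And>y. y \<in> ?S \<Longrightarrow> norm (M *v y) \<le> norm (M *v x0)"
    using continuous_attains_sup[OF c ne cont] by blast
  have nx0: "norm x0 = 1" using x0(1) by simp
  then have lt: "norm (M *v x0) < 1" using assms[of x0] by fastforce
  have "onorm (\<lambda>x. M *v x) \<le> norm (M *v x0)"
  proof (rule onorm_le)
    fix x :: "real^'n"
    show "norm (M *v x) \<le> norm (M *v x0) * norm x"
    proof (cases "x = 0")
      case True then show ?thesis by simp
    next
      case False
      let ?u = "(1 / norm x) *\<^sub>R x"
      have "?u \<in> ?S" using False by simp
      then have "norm (M *v ?u) \<le> norm (M *v x0)" by (rule x0(2))
      moreover have "norm (M *v ?u) = norm (M *v x) / norm x"
        by (simp add: matrix_vector_mult_scaleR)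
      ultimately show ?thesis using False by (simp add: divide_le_eq mult.commute)
    qed
  qed
  then show ?thesis using lt by simp
qed
theorem corollary1:
  fixes n0 :: nat
    and \<sigma> :: "real \<Rightarrow> nat"
    and t :: "nat \<Rightarrow> real"
    and \<tau> :: real
    and E :: "nat \<Rightarrow> ('n::finite option \<times> 'n option) set"
    and js :: "nat \<Rightarrow> nat"
    and Tc :: real
  assumes t0: "t 0 = 0"
    and tau_pos: "\<tau> > 0"
    and dwell: "\<And>j. t (Suc j) - t j \<ge> \<tau>"
    and sigma_range: "\<And>s. s \<ge> 0 \<Longrightarrow> \<sigma> s \<in> {1..n0}"
    and sigma_const: "\<And>j s. t j \<le> s \<Longrightarrow> s < t (Suc j) \<Longrightarrow> \<sigma> s = \<sigma> (t j)"
    and no_loops: "\<And>p v. p \<in> {1..n0} \<Longrightarrow> (v, v) \<notin> E p"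
    and undirected: "\<And>s i j. s \<ge> 0 \<Longrightarrow>
        ((Some j, Some i) \<in> E (\<sigma> s) \<longleftrightarrow> (Some i, Some j) \<in> E (\<sigma> s))"
    and Tc_pos: "Tc > 0"
    and subseq: "strict_mono js"
    and js0: "t (js 0) = 0"
    and Tc_bound: "\<And>k. t (js (Suc k)) - t (js k) \<le> Tc"
    and reach: "\<And>k i. (None, Some i) \<in>
        (\<Union>j\<in>{j. t (js k) \<le> t j \<and> t j < t (js (Suc k))}. E (\<sigma> (t j)))\<^sup>+"
  shows "\<exists>\<delta>::real. 0 < \<delta> \<and> \<delta> < 1 \<and>
    (\<forall>l::nat. l \<ge> 1 \<longrightarrow> (\<forall>k.
       onorm (\<lambda>x. lprod (\<lambda>r. proj_ker (H_mat (E (\<sigma> (t r))))) (js k) (js (k + l) - js k) *v x)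
         \<le> \<delta> ^ l))"
proof -
  define Hf where "Hf r = H_mat (E (\<sigma> (t r)))" for r
  define Pf where "Pf = (\<lambda>r. proj_ker (H_mat (E (\<sigma> (t r)))))"
  have PfH: "Pf = (\<lambda>r. proj_ker (Hf r))" unfolding Pf_def Hf_def by simp
  have tinc: "t j < t (Suc j)" for j using dwell[of j] tau_pos by linarith
  have smt: "strict_mono t" using tinc by (simp add: strict_mono_Suc_iff)
  have tle: "t a \<le> t b \<longleftrightarrow> a \<le> b" for a b using smt by (simp add: strict_mono_less_eq)
  have tlt: "t a < t b \<longleftrightarrow> a < b" for a b using smt by (simp add: strict_mono_less)
  have tnn: "t j \<ge> 0" for j using tle[of 0 j] t0 by simp
  have tgrow: "t (m + d) - t m \<ge> real d * \<tau>" for m d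
  proof (induction d)
    case 0 show ?case by simp
  next
    case (Suc d) then show ?case using dwell[of "m+d"] by (simp add: algebra_simps)
  qed
  define M where "M k = lprod Pf (js k) (js (Suc k) - js k)" for k
  have jsle: "js a \<le> js b \<longleftrightarrow> a \<le> b" for a b using subseq by (simp add: strict_mono_less_eq)
  have jsk: "js k \<le> js (Suc k)" for k using jsle by simp
  have sigp: "\<sigma> (t r) \<in> {1..n0}" for r using sigma_range tnn by blast
  have edges: "(\<forall>a b. (Some a, Some b) \<in> E (\<sigma> (t r)) \<longrightarrow> x$a = x$b) \<and>
      (\<forall>b. (None, Some b) \<in> E (\<sigma> (t r)) \<longrightarrow> x$b = 0)" if "Hf r *v x = 0" for r x
  proof -
    have "H_mat (E (\<sigma> (t r))) *v x = 0" using that unfolding Hf_def .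
    then show ?thesis
      using ker_H_edges[of "E (\<sigma> (t r))" x] undirected[OF tnn[of r]] no_loops[OF sigp[of r]] by blast
  qed
  have contr: "norm (M k *v x) < norm x" if xnz: "x \<noteq> 0" for k x
  proof (rule ccontr)
    assume a: "\<not> norm (M k *v x) < norm x"
    have ln: "norm (M k *v x) \<le> norm x \<and> (norm (M k *v x) = norm x \<longrightarrow> M k *v x = x \<and>
        (\<forall>r. js k \<le> r \<and> r < js k + (js (Suc k) - js k) \<longrightarrow> Hf r *v x = 0))"
      unfolding M_def PfH by (rule lprod_norm)
    have allr: "\<forall>r. js k \<le> r \<and> r < js (Suc k) \<longrightarrow> Hf r *v x = 0"
      using ln a jsk[of k] by auto
    define U where "U = (\<Union>j\<in>{j. t (js k) \<le> t j \<and> t j < t (js (Suc k))}. E (\<sigma> (t j)))"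
    have inU: "\<exists>j. Hf j *v x = 0 \<and> (u, v) \<in> E (\<sigma> (t j))" if "(u, v) \<in> U" for u v
      using that allr unfolding U_def tle tlt by blast
    have P: "\<forall>b. v = Some b \<longrightarrow> x$b = 0" if "(None, v) \<in> U\<^sup>+" for v
      using that
    proof (induction rule: trancl_induct)
      case (base y)
      then obtain j where j: "Hf j *v x = 0" "(None, y) \<in> E (\<sigma> (t j))" using inU by blast
      show ?case using edges[OF j(1)] j(2) by blast
    next
      case (step y z)
      then obtain j where j: "Hf j *v x = 0" "(y, z) \<in> E (\<sigma> (t j))" using inU by blast
      show ?case
      proof (intro allI impI)
        fix b assume zb: "z = Some b"
        show "x$b = 0"
        proof (cases y)
          case None then show ?thesis using edges[OF j(1)] j(2) zb by blast
        next
          case (Some a)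
          then have "x$a = x$b" using edges[OF j(1)] j(2) zb by blast
          then show ?thesis using step.IH Some by simp
        qed
      qed
    qed
    have "x = 0"
    proof (subst vec_eq_iff, intro allI)
      fix i
      have "(None, Some i) \<in> U\<^sup>+" using reach[where k=k and i=i] unfolding U_def .
      then show "x$i = 0$i" using P by simp
    qed
    then show False using xnz by simp
  qed
  have Mlt: "onorm (\<lambda>x. M k *v x) < 1" for k
    by (rule onorm_lt1) (rule contr)
  define D where "D = nat \<lceil>Tc / \<tau>\<rceil>"
  have dle: "js (Suc k) - js k \<le> D" for k
  proof -
    have "real (js (Suc k) - js k) * \<tau> \<le> Tc"
      using tgrow[where m="js k" and d="js (Suc k) - js k"] Tc_bound[of k] jsk[of k] by simp
    then have "real (js (Suc k) - js k) \<le> Tc / \<tau>" using tau_pos by (simp add: pos_le_divide_eq)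
    also have "\<dots> \<le> real D" unfolding D_def by (rule real_nat_ceiling_ge)
    finally show ?thesis by simp
  qed
  define F where "F = (\<lambda>p. proj_ker (H_mat (E p))) ` {1..n0}"
  define S where "S = (\<lambda>xs. foldr (**) xs (mat 1)) ` {xs. set xs \<subseteq> F \<and> length xs \<le> D}"
  have finS: "finite S" unfolding S_def F_def
    by (intro finite_imageI finite_lists_length_le) simp
  have MS: "M k \<in> S" for k
  proof -
    have "M k = foldr (**) (rev (map Pf [js k..<js k + (js (Suc k) - js k)])) (mat 1)"
      unfolding M_def by (rule lprod_foldr)
    moreover have "set (rev (map Pf [js k..<js k + (js (Suc k) - js k)])) \<subseteq> F"
      unfolding F_def Pf_def using sigp by auto
    moreover have "length (rev (map Pf [js k..<js k + (js (Suc k) - js k)])) \<le> D"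
      using dle[of k] by simp
    ultimately show ?thesis unfolding S_def by blast
  qed
  define R where "R = range (\<lambda>k. onorm (\<lambda>x. M k *v x))"
  have finR: "finite R"
  proof (rule finite_subset)
    show "R \<subseteq> (\<lambda>A. onorm (\<lambda>x. A *v x)) ` S" unfolding R_def using MS by blast
    show "finite ((\<lambda>A. onorm (\<lambda>x. A *v x)) ` S)" using finS by simp
  qed
  define \<delta>0 where "\<delta>0 = Max R"
  have d0lt: "\<delta>0 < 1"
  proof -
    have "\<delta>0 \<in> R" unfolding \<delta>0_def using finR by (intro Max_in) (auto simp: R_def)
    then show ?thesis using Mlt unfolding R_def by auto
  qed
  have d0ge: "onorm (\<lambda>x. M k *v x) \<le> \<delta>0" for k
    unfolding \<delta>0_def using finR by (intro Max_ge) (auto simp: R_def)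
  define \<delta> where "\<delta> = max \<delta>0 (1/2)"
  have dpos: "0 < \<delta>" and dlt: "\<delta> < 1" unfolding \<delta>_def using d0lt by auto
  have dge: "onorm (\<lambda>x. M k *v x) \<le> \<delta>" for k using d0ge[of k] unfolding \<delta>_def by linarith
  have main: "onorm (\<lambda>x. lprod Pf (js k) (js (k + l) - js k) *v x) \<le> \<delta> ^ l" for l k
  proof (induction l)
    case 0 then show ?case by (simp add: onorm_id)
  next
    case (Suc l)
    have kl: "js k \<le> js (k + l)" using jsle by simp
    have kl2: "js (k + l) \<le> js (Suc (k + l))" using jsle by simp
    have "js (k + Suc l) - js k = (js (k + l) - js k) + (js (Suc (k + l)) - js (k + l))"
      using kl kl2 by simp
    then have "lprod Pf (js k) (js (k + Suc l) - js k) = M (k + l) ** lprod Pf (js k) (js (k + l) - js k)"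
      unfolding M_def using lprod_add[of Pf "js k" "js (k + l) - js k" "js (Suc (k + l)) - js (k + l)"] kl
      by simp
    then have "(\<lambda>x. lprod Pf (js k) (js (k + Suc l) - js k) *v x) =
        (\<lambda>x. M (k + l) *v x) \<circ> (\<lambda>x. lprod Pf (js k) (js (k + l) - js k) *v x)"
      by (simp add: o_def matrix_vector_mul_assoc)
    then have "onorm (\<lambda>x. lprod Pf (js k) (js (k + Suc l) - js k) *v x) \<le>
        onorm (\<lambda>x. M (k + l) *v x) * onorm (\<lambda>x. lprod Pf (js k) (js (k + l) - js k) *v x)"
      using onorm_compose[OF matrix_vector_mul_bounded_linear matrix_vector_mul_bounded_linear,
          of "M (k + l)" "lprod Pf (js k) (js (k + l) - js k)"] by metis
    also have "\<dots> \<le> \<delta> * \<delta> ^ l"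
      by (intro mult_mono dge Suc.IH onorm_pos_le matrix_vector_mul_bounded_linear) (use dpos in simp)
    finally show ?case by simp
  qed
  show ?thesis
    using dpos dlt main unfolding Pf_def by blast
qed

end
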